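(* Let $d \geq 0$ be an integer and $t>0$. Let $M$ be a symmetric, unimodal, integer-valued random variable. Then $$\mathbb{E}\left[\log\frac{I_M(t)}{I_{M-d}(t)}\right] \leq \frac{d+d^2}{2t}.$$
   Context: $I_n(t)$ denotes the modified Bessel function of the first kind of integer order $n$ evaluated at $t$ (so $I_{-n}=I_n$). An integer-valued random variable $M$ is symmetric if $\mathbb{P}(M=m)=\mathbb{P}(M=-m)$ for all $m$, and (for symmetric laws) unimodal means that $m \mapsto \mathbb{P}(M=m)$ is non-increasing in $|m|$. *)

theory Defs
  imports "HOL-Probability.Probability"
begin

text \<open>Modified Bessel function of the first kind of integer order n, via its
power series; for negative n we use I_{-n} = I_n.\<close>
definition besselI :: "int \<Rightarrow> real \<Rightarrow> real" where
  "besselI n t = (\<Sum>k. (t / 2) ^ (2 * k + nat \<bar>n\<bar>) / (fact k * fact (k + nat \<bar>n\<bar>)))"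

definition symmetric_pmf :: "int pmf \<Rightarrow> bool" where
  "symmetric_pmf p \<longleftrightarrow> (\<forall>m. pmf p m = pmf p (- m))"

definition unimodal_sym_pmf :: "int pmf \<Rightarrow> bool" where
  "unimodal_sym_pmf p \<longleftrightarrow> (\<forall>m m'. \<bar>m\<bar> \<le> \<bar>m'\<bar> \<longrightarrow> pmf p m' \<le> pmf p m)"

end

theory Submission
  imports Defs
begin


definition bt :: "nat \<Rightarrow> real \<Rightarrow> nat \<Rightarrow> real" where
  "bt n t j = (t/2)^(2*j+n) / (fact j * fact (j+n))"

lemma bt_fun: "bt n t = (\<lambda>j. (t/2)^(2*j+n) / (fact j * fact (j+n)))"
  by (rule ext) (simp add: bt_def)

lemma besselI_nat: "besselI (int n) t = suminf (bt n t)"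
  by (simp add: besselI_def bt_fun)

lemma bt_pos: "t > 0 \<Longrightarrow> bt n t j > 0"
  by (simp add: bt_def)

lemma bt_summable: assumes "t > 0" shows "summable (bt n t)"
proof (rule summable_comparison_test')
  show "summable (\<lambda>j. (t/2)^n * ((t/2)^2)^j / fact j)"
  proof -
    have "summable (\<lambda>j. ((t/2)^2)^j / fact j)"
      using summable_exp[of "(t/2)^2"] unfolding divide_inverse_commute .
    from summable_mult[OF this, of "(t/2)^n"] show ?thesis by simp
  qed
  fix j :: nat
  have "(t/2)^(2*j+n) = (t/2)^n * ((t/2)^2)^j"
    by (metis power_add power_mult mult.commute)
  moreover have "fact j \<le> (fact j * fact (j+n) :: real)"
    by (simp add: fact_ge_1)
  ultimately show "norm (bt n t j) \<le> (t/2)^n * ((t/2)^2)^j / fact j"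
    using assms by (simp add: bt_def divide_left_mono)
qed

lemma besselI_pos: assumes "t > 0" shows "besselI m t > 0"
proof -
  have "besselI m t = suminf (bt (nat \<bar>m\<bar>) t)" by (simp add: besselI_def bt_fun)
  also have "\<dots> > 0" using bt_summable[OF assms] bt_pos[OF assms]
    by (intro suminf_pos) auto
  finally show ?thesis .
qed

lemma besselI_abs: "besselI m t = besselI (int (nat \<bar>m\<bar>)) t"
  by (simp add: besselI_def)

lemma bessel_rec: assumes "t > 0"
  shows "suminf (bt n t) - suminf (bt (n+2) t) = (2 * (real n + 1) / t) * suminf (bt (n+1) t)"
proof -
  let ?c = "2 * (real n + 1) / t"
  have s: "\<And>k. summable (bt k t)" using bt_summable[OF assms] .
  have h1: "bt n t (Suc j) - bt (n+2) t j = ?c * bt (n+1) t (Suc j)" for j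
  proof -
    define P where "P = (t/2)^(2*j+n+2)"
    define a where "a = (fact j :: real)"
    define b where "b = (fact (j+n+1) :: real)"
    have a0: "a > 0" and b0: "b > 0" by (simp_all add: a_def b_def)
    have f1: "fact (Suc j) = (real j + 1) * a" by (simp add: a_def)
    have f2: "fact (Suc j + (n+1)) = (real j + real n + 2) * b"
      using fact_Suc[of "j+n+1"] by (simp add: b_def algebra_simps)
    have f2': "fact (j + (n+2)) = (real j + real n + 2) * b"
      using fact_Suc[of "j+n+1"] by (simp add: b_def algebra_simps)
    have f4: "fact (Suc j + n) = b" by (simp add: b_def)
    have p1: "(t/2)^(2 * Suc j + (n+1)) = P * (t/2)" by (simp add: P_def)
    have p2: "(t/2)^(2 * Suc j + n) = P" by (simp add: P_def)
    have p3: "(t/2)^(2 * j + (n+2)) = P" by (simp add: P_def)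
    have e1: "bt n t (Suc j) = P / ((real j + 1) * a * b)"
      unfolding bt_def f1 f4 p2 ..
    have e2: "bt (n+2) t j = P / (a * ((real j + real n + 2) * b))"
      unfolding bt_def f2' p3 a_def ..
    have e3: "bt (n+1) t (Suc j) = P * (t/2) / ((real j + 1) * a * ((real j + real n + 2) * b))"
      unfolding bt_def f1 f2 p1 ..
    have key: "P / (u * a * b) - P / (a * (v * b)) = 2 * (real n + 1) / t * (P * (t/2) / (u * a * (v * b)))"
      if "u > 0" "v > 0" "v - u = real n + 1" for u v
    proof -
      have "P / (u * a * b) - P / (a * (v * b)) = P * (v - u) / (u * a * v * b)"
        using that(1,2) a0 b0 by (simp add: field_simps)
      also have "\<dots> = 2 * (real n + 1) / t * (P * (t/2) / (u * a * (v * b)))"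
        unfolding that(3) using assms that(1,2) a0 b0 by (simp add: field_simps)
      finally show ?thesis .
    qed
    show ?thesis unfolding e1 e2 e3 by (rule key) auto
  qed
  have h0: "bt n t 0 = ?c * bt (n+1) t 0"
  proof -
    have "fact (n+1) = (real n + 1) * (fact n :: real)" by simp
    moreover have "(t/2)^(n+1) = (t/2)^n * (t/2)" by simp
    ultimately have q1: "bt (n+1) t 0 = (t/2)^n * (t/2) / ((real n + 1) * fact n)"
      by (simp add: bt_def ac_simps)
    have q2: "bt n t 0 = (t/2)^n / fact n" by (simp add: bt_def)
    have key: "X / F = 2 * w / t * (X * (t/2) / (w * F))" if "w > 0" "F > 0" for X F w :: real
      using that assms by (simp add: field_simps)
    show ?thesis unfolding q1 q2 by (rule key) auto
  qed
  have "suminf (bt n t) - suminf (bt (n+2) t) = bt n t 0 + (\<Sum>j. bt n t (Suc j) - bt (n+2) t j)"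
    using suminf_split_head[OF s[of n]] suminf_diff[OF summable_Suc_iff[THEN iffD2, OF s[of n]] s[of "n+2"]]
    by simp
  also have "\<dots> = ?c * bt (n+1) t 0 + ?c * (\<Sum>j. bt (n+1) t (Suc j))"
    using h0 h1 suminf_mult[OF summable_Suc_iff[THEN iffD2, OF s[of "n+1"]], of ?c] by simp
  also have "\<dots> = ?c * suminf (bt (n+1) t)"
  proof -
    have "bt (n+1) t 0 + (\<Sum>j. bt (n+1) t (Suc j)) = suminf (bt (n+1) t)"
      using suminf_split_head[OF s[of "n+1"]] by simp
    then show ?thesis by (metis distrib_left)
  qed
  finally show ?thesis .
qed



lemma vand_trunc: assumes "N \<le> r"
  shows "(\<Sum>i\<le>N. (N choose i) * (p choose (r - i))) = (N + p) choose r"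
proof -
  have "(\<Sum>i\<le>N. (N choose i) * (p choose (r - i))) = (\<Sum>i\<le>r. (N choose i) * (p choose (r - i)))"
    using assms by (intro sum.mono_neutral_left) auto
  also have "\<dots> = (N + p) choose r" by (rule vandermonde)
  finally show ?thesis .
qed

lemma binom_ineq:
  "(\<Sum>i\<le>N. (N choose i) * ((N+2*n+2) choose (i+n))) \<le> (\<Sum>i\<le>N. (N choose i) * ((N+2*n+2) choose (i+n+1)))"
proof -
  let ?P = "N+2*n+2"
  have "(\<Sum>i\<le>N. (N choose i) * (?P choose (i+n))) = (\<Sum>i\<le>N. (N choose i) * (?P choose ((N+n+2) - i)))"
  proof (intro sum.cong refl)
    fix i assume "i \<in> {..N}"
    then have "i + n \<le> ?P" "?P - (i+n) = (N+n+2) - i" by auto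
    then show "(N choose i) * (?P choose (i+n)) = (N choose i) * (?P choose ((N+n+2) - i))"
      by (metis binomial_symmetric)
  qed
  also have "\<dots> = (2*(N+n+1)) choose (N+n+2)"
    using vand_trunc[of N "N+n+2" ?P] by (simp add: algebra_simps)
  also have "\<dots> \<le> (2*(N+n+1)) choose (N+n+1)" by (rule binomial_maximum')
  also have "\<dots> = (\<Sum>i\<le>N. (N choose i) * (?P choose ((N+n+1) - i)))"
    using vand_trunc[of N "N+n+1" ?P] by (simp add: algebra_simps)
  also have "\<dots> = (\<Sum>i\<le>N. (N choose i) * (?P choose (i+n+1)))"
  proof (intro sum.cong refl)
    fix i assume "i \<in> {..N}"
    then have "i + n + 1 \<le> ?P" "?P - (i+n+1) = (N+n+1) - i" by auto
    then show "(N choose i) * (?P choose ((N+n+1) - i)) = (N choose i) * (?P choose (i+n+1))"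
      by (metis binomial_symmetric)
  qed
  finally show ?thesis .
qed

lemma bt_prod: assumes "i \<le> N"
  shows "bt a t i * bt b t (N - i) = (t/2)^(2*N+a+b) / (fact N * fact (N+a+b)) * real (N choose i) * real ((N+a+b) choose (i+a))"
proof -
  have e1: "real (N choose i) = fact N / (fact i * fact (N-i))" using assms by (rule binomial_fact)
  have e2: "real ((N+a+b) choose (i+a)) = fact (N+a+b) / (fact (i+a) * fact (N-i+b))"
    using binomial_fact[of "i+a" "N+a+b"] assms by (simp add: algebra_simps)
  have e3: "(t/2)^(2*N+a+b) = (t/2)^(2*i+a) * (t/2)^(2*(N-i)+b)"
    using assms by (simp add: power_add[symmetric] algebra_simps)
  have l: "bt a t i * bt b t (N - i) = (t/2)^(2*i+a) / (fact i * fact (i+a)) * ((t/2)^(2*(N-i)+b) / (fact (N-i) * fact (N-i+b)))"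
    by (simp add: bt_def)
  have key: "Y1 / (F1 * F2) * (Y2 / (F3 * F4)) = Y1 * Y2 / (FN * FP) * (FN / (F1 * F3)) * (FP / (F2 * F4))"
    if "F1 > 0" "F2 > 0" "F3 > 0" "F4 > 0" "FN > 0" "FP > 0" for Y1 Y2 F1 F2 F3 F4 FN FP :: real
    using that by (simp add: field_simps)
  show ?thesis unfolding l e1 e2 e3 by (rule key) auto
qed

lemma cauchy_term_le: assumes "t > 0"
  shows "(\<Sum>i\<le>N. bt n t i * bt (n+2) t (N - i)) \<le> (\<Sum>i\<le>N. bt (n+1) t i * bt (n+1) t (N - i))"
proof -
  define X where "X = (t/2)^(2*N+2*n+2) / (fact N * fact (N+2*n+2))"
  have X0: "X \<ge> 0" using assms by (simp add: X_def)
  have "(\<Sum>i\<le>N. bt n t i * bt (n+2) t (N - i)) = (\<Sum>i\<le>N. X * real ((N choose i) * ((N+2*n+2) choose (i+n))))"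
  proof (intro sum.cong refl)
    fix i assume "i \<in> {..N}"
    then show "bt n t i * bt (n+2) t (N - i) = X * real ((N choose i) * ((N+2*n+2) choose (i+n)))"
    proof -
      have q: "N+n+(n+2) = N+2*n+2" "2*N+n+(n+2) = 2*N+2*n+2" by simp_all
      from \<open>i \<in> {..N}\<close> have "i \<le> N" by simp
      from bt_prod[OF this, of n t "n+2"] show ?thesis unfolding q X_def by (simp only: of_nat_mult mult.assoc)
    qed
  qed
  also have "\<dots> = X * real (\<Sum>i\<le>N. (N choose i) * ((N+2*n+2) choose (i+n)))"
    by (simp add: sum_distrib_left)
  also have "\<dots> \<le> X * real (\<Sum>i\<le>N. (N choose i) * ((N+2*n+2) choose (i+n+1)))"
    by (rule mult_left_mono[OF of_nat_mono[OF binom_ineq[of N n]] X0])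
  also have "\<dots> = (\<Sum>i\<le>N. X * real ((N choose i) * ((N+2*n+2) choose (i+n+1))))"
    by (simp add: sum_distrib_left)
  also have "\<dots> = (\<Sum>i\<le>N. bt (n+1) t i * bt (n+1) t (N - i))"
  proof (intro sum.cong refl)
    fix i assume "i \<in> {..N}"
    then show "X * real ((N choose i) * ((N+2*n+2) choose (i+n+1))) = bt (n+1) t i * bt (n+1) t (N - i)"
    proof -
      have q: "N+(n+1)+(n+1) = N+2*n+2" "2*N+(n+1)+(n+1) = 2*N+2*n+2" "i+(n+1) = i+n+1" by simp_all
      from \<open>i \<in> {..N}\<close> have "i \<le> N" by simp
      from bt_prod[OF this, of "n+1" t "n+1"] show ?thesis unfolding q X_def by (simp only: of_nat_mult mult.assoc)
    qed
  qed
  finally show ?thesis .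
qed

lemma turan: assumes "t > 0"
  shows "suminf (bt n t) * suminf (bt (n+2) t) \<le> suminf (bt (n+1) t) * suminf (bt (n+1) t)"
proof -
  have ns: "summable (\<lambda>j. norm (bt k t j))" for k
  proof -
    have "(\<lambda>j. norm (bt k t j)) = bt k t" by (rule ext) (simp add: abs_of_pos bt_pos assms)
    then show ?thesis using bt_summable[OF assms, of k] by simp
  qed
  have s1: "(\<lambda>N. \<Sum>i\<le>N. bt n t i * bt (n+2) t (N - i)) sums (suminf (bt n t) * suminf (bt (n+2) t))"
    by (rule Cauchy_product_sums[OF ns ns])
  have s2: "(\<lambda>N. \<Sum>i\<le>N. bt (n+1) t i * bt (n+1) t (N - i)) sums (suminf (bt (n+1) t) * suminf (bt (n+1) t))"
    by (rule Cauchy_product_sums[OF ns ns])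
  show ?thesis by (rule sums_le[OF cauchy_term_le[OF assms] s1 s2])
qed



lemma quad_bound:
  fixes A B C x :: real
  assumes "A > 0" "B > 0" "C > 0" "x > 0" "A - C = 2 * x * B" "A * C \<le> B * B"
  shows "A \<le> (1 + x + x^2/2) * B"
proof (rule ccontr)
  define z where "z = 1 + x + x^2/2"
  assume "\<not> A \<le> (1 + x + x^2/2) * B"
  then have h: "A > z * B" by (simp add: z_def)
  have zx: "z - x > 0" using assms by (simp add: z_def add_pos_nonneg)
  have q: "z * z - 2 * x * z - 1 = x^4 / 4" by (simp add: z_def power2_eq_square power4_eq_xxxx field_simps) 
  have "A * A - 2 * x * A * B - B * B - (z * z - 2 * x * z - 1) * B * B = (A - z * B) * (A + z * B - 2 * x * B)"
    by (simp add: algebra_simps)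
  moreover have "(A - z * B) * (A + z * B - 2 * x * B) > 0"
  proof (rule mult_pos_pos)
    show "A - z * B > 0" using h by simp
    have "(z - x) * B > 0" using zx assms by simp
    then show "A + z * B - 2 * x * B > 0" using h by (simp add: algebra_simps)
  qed
  moreover have "(z * z - 2 * x * z - 1) * B * B \<ge> 0" unfolding q using assms by simp
  moreover have "A * C = A * A - 2 * x * A * B"
  proof -
    have "C = A - 2 * x * B" using assms by simp
    then show ?thesis by (simp only: right_diff_distrib) (simp add: ac_simps)
  qed
  ultimately show False using assms(6) by linarith
qed

definition psi :: "real \<Rightarrow> nat \<Rightarrow> real" where
  "psi t k = ln (besselI (int k) t)"

lemma step_bound: assumes "t > 0"
  shows "psi t n - psi t (Suc n) \<le> (real n + 1) / t"
proof -
  define A where "A = suminf (bt n t)"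
  define B where "B = suminf (bt (n+1) t)"
  define C where "C = suminf (bt (n+2) t)"
  define x where "x = (real n + 1) / t"
  have pos: "A > 0" "B > 0" "C > 0"
    using besselI_pos[OF assms] unfolding A_def B_def C_def besselI_nat[symmetric] by auto
  have x0: "x > 0" using assms by (simp add: x_def)
  have rec: "A - C = 2 * x * B" using bessel_rec[OF assms, of n] by (simp add: A_def B_def C_def x_def)
  have tur: "A * C \<le> B * B" using turan[OF assms, of n] by (simp add: A_def B_def C_def)
  have "A \<le> (1 + x + x^2/2) * B" by (rule quad_bound[OF pos x0 rec tur])
  also have "\<dots> \<le> exp x * B" using exp_lower_Taylor_quadratic[of x] x0 pos by simp
  finally have "A \<le> exp x * B" .
  then have "ln A \<le> ln (exp x * B)" using pos by simp
  also have "\<dots> = x + ln B" using pos by (simp add: ln_mult)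
  finally have "ln A - ln B \<le> x" by simp
  moreover have "psi t n = ln A" "psi t (Suc n) = ln B"
    using besselI_nat[of n t] besselI_nat[of "Suc n" t] by (simp_all add: psi_def A_def B_def)
  ultimately show ?thesis by (simp add: x_def)
qed

lemma tele_bound: assumes "t > 0" "a \<le> b"
  shows "psi t a - psi t b \<le> (real b * (real b + 1) - real a * (real a + 1)) / (2 * t)"
  using assms(2)
proof (induction b)
  case 0
  then show ?case by simp
next
  case (Suc b)
  show ?case
  proof (cases "a = Suc b")
    case True
    then show ?thesis by simp
  next
    case False
    then have "a \<le> b" using Suc.prems by simp
    from Suc.IH[OF this] step_bound[OF assms(1), of b]
    have "psi t a - psi t (Suc b) \<le> (real b * (real b + 1) - real a * (real a + 1)) / (2 * t) + (real b + 1) / t"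
      by simp
    also have "\<dots> = (real (Suc b) * (real (Suc b) + 1) - real a * (real a + 1)) / (2 * t)"
      using assms(1) by (simp add: field_simps)
    finally show ?thesis .
  qed
qed



definition phi :: "real \<Rightarrow> int \<Rightarrow> real" where
  "phi t m = psi t (nat \<bar>m\<bar>)"

lemma phi_eq: "phi t m = ln (besselI m t)"
  using besselI_abs[of m t] by (simp add: phi_def psi_def)

lemma tele_int: "(\<Sum>i<d. g (c - int i) - g (c - int i - 1)) = g c - g (c - int d)"
  for g :: "int \<Rightarrow> real"
  by (induction d) (simp_all add: algebra_simps)

lemma sym_interval_Suc:
  fixes g :: "int \<Rightarrow> real"
  shows "(\<Sum>m\<in>{-int (Suc N)..int (Suc N)}. g m) = (\<Sum>m\<in>{-int N..int N}. g m) + g (int N + 1) + g (- int N - 1)"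
proof -
  have "{-int (Suc N)..int (Suc N)} = insert (int N + 1) (insert (- int N - 1) {-int N..int N})"
    by auto
  then show ?thesis by (simp add: algebra_simps)
qed

lemma S_formula:
  "(\<Sum>m\<in>{-int n..int n}. phi t m - phi t (m - int d)) = (\<Sum>i<d. phi t (int n - int i) - phi t (- int n - int i - 1))"
proof (induction n)
  case 0
  have "(\<Sum>i<d. phi t (- int i) - phi t (- int i - 1)) = phi t 0 - phi t (0 - int d)"
    using tele_int[of "phi t" 0 d] by simp
  then show ?case by simp
next
  case (Suc n)
  have a: "(\<Sum>i<d. phi t (int n + 1 - int i) - phi t (int n + 1 - int i - 1)) = phi t (int n + 1) - phi t (int n + 1 - int d)"
    by (rule tele_int)
  have b: "(\<Sum>i<d. phi t (- int n - 1 - int i) - phi t (- int n - 1 - int i - 1)) = phi t (- int n - 1) - phi t (- int n - 1 - int d)"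
    by (rule tele_int)
  have "(\<Sum>i<d. phi t (int (Suc n) - int i) - phi t (- int (Suc n) - int i - 1))
     = (\<Sum>i<d. (phi t (int n - int i) - phi t (- int n - int i - 1))
          + (phi t (int n + 1 - int i) - phi t (int n + 1 - int i - 1))
          + (phi t (- int n - 1 - int i) - phi t (- int n - 1 - int i - 1)))"
  proof (intro sum.cong refl)
    fix i
    have e: "int (Suc n) - int i = int n + 1 - int i" "- int (Suc n) - int i - 1 = - int n - 1 - int i - 1"
      "int n + 1 - int i - 1 = int n - int i" "- int n - 1 - int i = - int n - int i - 1" by simp_all
    show "phi t (int (Suc n) - int i) - phi t (- int (Suc n) - int i - 1)
     = (phi t (int n - int i) - phi t (- int n - int i - 1))
          + (phi t (int n + 1 - int i) - phi t (int n + 1 - int i - 1))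
          + (phi t (- int n - 1 - int i) - phi t (- int n - 1 - int i - 1))"
      by (simp only: e)
  qed
  also have "\<dots> = (\<Sum>i<d. phi t (int n - int i) - phi t (- int n - int i - 1))
          + (\<Sum>i<d. phi t (int n + 1 - int i) - phi t (int n + 1 - int i - 1))
          + (\<Sum>i<d. phi t (- int n - 1 - int i) - phi t (- int n - 1 - int i - 1))"
    by (simp only: sum.distrib)
  finally show ?case unfolding sym_interval_Suc Suc.IH a b by (simp add: algebra_simps)
qed

lemma term_bound: assumes "t > 0"
  shows "phi t (int n - int i) - phi t (- int n - int i - 1) \<le> (2 * real n + 1) * (real i + 1) / t"
proof -
  have "nat \<bar>- int n - int i - 1\<bar> = n + i + 1" by arith
  then have p2: "phi t (- int n - int i - 1) = psi t (n + i + 1)"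
    by (simp only: phi_def)
  show ?thesis
  proof (cases "i \<le> n")
    case True
    then have "nat \<bar>int n - int i\<bar> = n - i" by arith
    then have p1: "phi t (int n - int i) = psi t (n - i)" by (simp only: phi_def)
    have "psi t (n - i) - psi t (n + i + 1) \<le> (real (n+i+1) * (real (n+i+1) + 1) - real (n-i) * (real (n-i) + 1)) / (2 * t)"
      using True by (intro tele_bound assms) simp
    also have "\<dots> = (2 * real i + 1) * (2 * real n + 2) / (2 * t)"
      using True by (simp add: of_nat_diff algebra_simps)
    also have "\<dots> \<le> (2 * real n + 1) * (real i + 1) / t"
    proof -
      have "(2 * real i + 1) * (2 * real n + 2) \<le> 2 * ((2 * real n + 1) * (real i + 1))"
        using True by (simp add: algebra_simps)
      then show ?thesis using assms by (simp add: field_simps)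
    qed
    finally show ?thesis unfolding p1 p2 .
  next
    case False
    then have "nat \<bar>int n - int i\<bar> = i - n" by arith
    then have p1: "phi t (int n - int i) = psi t (i - n)" by (simp only: phi_def)
    have "psi t (i - n) - psi t (n + i + 1) \<le> (real (n+i+1) * (real (n+i+1) + 1) - real (i-n) * (real (i-n) + 1)) / (2 * t)"
      using False by (intro tele_bound assms) simp
    also have "\<dots> = (2 * real n + 1) * (real i + 1) / t"
      using False assms by (simp add: of_nat_diff field_simps)
    finally show ?thesis unfolding p1 p2 .
  qed
qed

lemma gauss_sum: "(\<Sum>i<d. real i + 1) = (real d + (real d)^2) / 2"
  by (induction d) (simp_all add: power2_eq_square field_simps)

lemma S_bound: assumes "t > 0"
  shows "(\<Sum>m\<in>{-int n..int n}. phi t m - phi t (m - int d)) \<le> (2 * real n + 1) * ((real d + (real d)^2) / (2 * t))"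
proof -
  have "(\<Sum>m\<in>{-int n..int n}. phi t m - phi t (m - int d)) \<le> (\<Sum>i<d. (2 * real n + 1) * (real i + 1) / t)"
    unfolding S_formula by (intro sum_mono term_bound assms)
  also have "\<dots> = (2 * real n + 1) / t * (\<Sum>i<d. real i + 1)"
    by (simp add: sum_distrib_left)
  also have "\<dots> = (2 * real n + 1) * ((real d + (real d)^2) / (2 * t))"
    unfolding gauss_sum by simp
  finally show ?thesis .
qed



lemma trunc_bound:
  fixes F :: "int \<Rightarrow> real" and p :: "int \<Rightarrow> real" and B :: real
  assumes sym: "\<And>m. p (- m) = p m"
    and mono: "\<And>n::nat. p (int n + 1) \<le> p (int n)"
    and Sb: "\<And>n. (\<Sum>m\<in>{-int n..int n}. F m) \<le> (2 * real n + 1) * B"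
  shows "(\<Sum>m\<in>{-int N..int N}. p m * F m) - p (int N) * (\<Sum>m\<in>{-int N..int N}. F m)
         \<le> B * ((\<Sum>m\<in>{-int N..int N}. p m) - p (int N) * (2 * real N + 1))"
proof (induction N)
  case 0
  then show ?case by simp
next
  case (Suc N)
  let ?T = "\<Sum>m\<in>{-int N..int N}. p m * F m"
  let ?S = "\<Sum>m\<in>{-int N..int N}. F m"
  let ?P = "\<Sum>m\<in>{-int N..int N}. p m"
  have pm: "p (- int N - 1) = p (int N + 1)" using sym[of "int N + 1"] by simp
  have T: "(\<Sum>m\<in>{-int (Suc N)..int (Suc N)}. p m * F m) = ?T + p (int N + 1) * (F (int N + 1) + F (- int N - 1))"
    using sym_interval_Suc[of "\<lambda>m. p m * F m" N] pm by (simp add: algebra_simps)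
  have S: "(\<Sum>m\<in>{-int (Suc N)..int (Suc N)}. F m) = ?S + (F (int N + 1) + F (- int N - 1))"
    using sym_interval_Suc[of F N] by simp
  have P: "(\<Sum>m\<in>{-int (Suc N)..int (Suc N)}. p m) = ?P + 2 * p (int N + 1)"
    using sym_interval_Suc[of p N] pm by simp
  have d: "(p (int N) - p (int N + 1)) * ?S \<le> (p (int N) - p (int N + 1)) * ((2 * real N + 1) * B)"
    using mono[of N] Sb[of N] by (intro mult_left_mono) simp_all
  have ps: "p (int (Suc N)) = p (int N + 1)" by (simp add: add.commute)
  show ?case unfolding T S P ps using Suc.IH d by (simp add: algebra_simps)
qed



theorem mainTheorem3:
  fixes d :: nat and t :: real and M :: "int pmf"
  assumes "t > 0"
    and "symmetric_pmf M"
    and "unimodal_sym_pmf M"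
  shows "measure_pmf.expectation M (\<lambda>m. ln (besselI m t / besselI (m - int d) t))
           \<le> (real d + (real d)\<^sup>2) / (2 * t)"
proof -
  define B where "B = (real d + (real d)\<^sup>2) / (2 * t)"
  define F where "F = (\<lambda>m. ln (besselI m t / besselI (m - int d) t))"
  have B0: "B \<ge> 0" using assms(1) unfolding B_def by (intro divide_nonneg_pos) auto
  have Feq: "F m = phi t m - phi t (m - int d)" for m
    using besselI_pos[OF assms(1), of m] besselI_pos[OF assms(1), of "m - int d"]
    by (simp add: F_def phi_eq ln_div)
  have Sb: "(\<Sum>m\<in>{-int n..int n}. F m) \<le> (2 * real n + 1) * B" for n
    unfolding Feq B_def using S_bound[OF assms(1), where n=n and d=d] by simp
  have sym: "pmf M (- m) = pmf M m" for m
    using assms(2) unfolding symmetric_pmf_def by metis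
  have mono: "pmf M (int n + 1) \<le> pmf M (int n)" for n :: nat
    using assms(3) unfolding unimodal_sym_pmf_def by (metis abs_of_nat le_add_same_cancel1 of_nat_0_le_iff abs_of_nonneg add_nonneg_nonneg zero_le_one)
  have TB: "(\<Sum>m\<in>{-int N..int N}. F m * pmf M m) \<le> B" for N
  proof -
    have tb: "(\<Sum>m\<in>{-int N..int N}. pmf M m * F m) - pmf M (int N) * (\<Sum>m\<in>{-int N..int N}. F m)
         \<le> B * ((\<Sum>m\<in>{-int N..int N}. pmf M m) - pmf M (int N) * (2 * real N + 1))"
      by (rule trunc_bound[of "pmf M", OF sym mono Sb])
    have "pmf M (int N) * (\<Sum>m\<in>{-int N..int N}. F m) \<le> pmf M (int N) * ((2 * real N + 1) * B)"
      using Sb[of N] by (intro mult_left_mono) simp_all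
    moreover have "(\<Sum>m\<in>{-int N..int N}. pmf M m) \<le> 1"
      using measure_measure_pmf_finite[of "{-int N..int N}" M] measure_pmf.prob_le_1[of M "{-int N..int N}"] by simp
    moreover have "B * (\<Sum>m\<in>{-int N..int N}. pmf M m) \<le> B"
      using calculation(2) B0 by (simp add: mult_left_le)
    ultimately show ?thesis using tb by (simp add: algebra_simps)
  qed
  have "measure_pmf.expectation M F \<le> B"
  proof (cases "integrable M F")
    case False
    then show ?thesis using B0 by (simp add: not_integrable_integral_eq)
  next
    case True
    define s where "s = (\<lambda>(N::nat) m. F m * indicator {-int N..int N} m)"
    have int_s: "measure_pmf.expectation M (s N) = (\<Sum>m\<in>{-int N..int N}. F m * pmf M m)" for N
    proof -
      have "measure_pmf.expectation M (s N) = (\<Sum>m\<in>{-int N..int N}. s N m * pmf M m)"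
        by (rule integral_measure_pmf_real) (auto simp: s_def indicator_def split: if_splits)
      also have "\<dots> = (\<Sum>m\<in>{-int N..int N}. F m * pmf M m)"
        by (intro sum.cong refl) (simp add: s_def)
      finally show ?thesis .
    qed
    have lim: "(\<lambda>N. measure_pmf.expectation M (s N)) \<longlonglongrightarrow> measure_pmf.expectation M F"
    proof (rule integral_dominated_convergence[where w = "\<lambda>m. norm (F m)"])
      show "F \<in> borel_measurable (measure_pmf M)" by simp
      show "s i \<in> borel_measurable (measure_pmf M)" for i by simp
      show "integrable (measure_pmf M) (\<lambda>m. norm (F m))" using True by (rule integrable_norm)
      show "AE x in measure_pmf M. (\<lambda>i. s i x) \<longlonglongrightarrow> F x"
      proof (rule AE_I2)
        fix x :: int
        have "eventually (\<lambda>i. s i x = F x) sequentially"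
          unfolding eventually_sequentially
          by (rule exI[of _ "nat \<bar>x\<bar>"]) (auto simp: s_def indicator_def)
        then show "(\<lambda>i. s i x) \<longlonglongrightarrow> F x" by (rule tendsto_eventually)
      qed
      show "AE x in measure_pmf M. norm (s i x) \<le> norm (F x)" for i
        by (rule AE_I2) (auto simp: s_def indicator_def)
    qed
    show ?thesis
      using lim by (rule LIMSEQ_le_const2) (auto simp: int_s TB)
  qed
  then show ?thesis unfolding F_def B_def .
qed

end
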